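(* For all integers $i,j$ the following hold (whenever every triple $(m',n',k')$ appearing as a subscript satisfies $m',n'\ge0$ and $0\le k'\le\min(m',n')$, as guaranteed by the stated hypotheses): (1) If $1\le k\le m-1$ and $k\le n$: $c_{m,n,k}(i,j)=c_{m-1,n,k}(i,j)+c_{m-1,n-1,k-1}(i,j-1)$. (2) If $1\le k\le m$ and $k\le n-1$: $c_{m,n,k}(i,j)=c_{m,n-1,k}(i,j)-c_{m-1,n-1,k-1}(i-1,j)$. (3) If $0\le k\le\min(m-1,n-1)$ and $i+j>k$: $c_{m,n,k}(i,j)=c_{m-1,n,k}(i-1,j)+c_{m,n-1,k}(i,j-1)$. (4) If $0\le k\le\min(m,n)-1$ and $i+j>k$: $c_{m,n,k}(i,j)=c_{m+1,n,k+1}(i,j)-c_{m,n+1,k+1}(i,j)$.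
   Context: Binomial coefficients $\binom{a}{b}$ equal $\frac{a!}{b!(a-b)!}$ when $0\le b\le a$ and $0$ otherwise. For integers $m,n\ge0$, $0\le k\le\min(m,n)$ and arbitrary integers $i,j$, define $c_{m,n,k}(i,j)=\sum_{l=0}^{k}(-1)^l\binom{i+j-k}{i-l}\binom{m-l}{k-l}\binom{n-k+l}{l}$ if $i+j\ge k$, and $c_{m,n,k}(i,j)=0$ if $i+j<k$. Equivalently, for $i+j\ge k$, $c_{m,n,k}(i,j)$ is the coefficient of $x^jy^i$ in $(x+y)^{i+j-k}(1-x)^{-(m-k+1)}(1+y)^{-(n-k+1)}$. (For $0\le i\le m$, $0\le j\le n$, $k\le i+j\le m+n-k$, this is the coordinate of $f^i\phi_m\otimes f^j\phi_n$ in the weight vector $f^{i+j-k}\phi_{m,n,k}$ of the copy of $V(m+n-2k)$ in $V(m)\otimes V(n)$ generated by the highest weight vector $\phi_{m,n,k}=\sum_{l=0}^{k}(-1)^l\binom{m-l}{k-l}\binom{n-k+l}{l} f^l\phi_m\otimes f^{k-l}\phi_n$.) *)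

theory Defs
  imports Main
begin

definition ibinom :: "int \<Rightarrow> int \<Rightarrow> int" where
  "ibinom a b = (if 0 \<le> b \<and> b \<le> a then int (nat a choose nat b) else 0)"

definition cc :: "nat \<Rightarrow> nat \<Rightarrow> nat \<Rightarrow> int \<Rightarrow> int \<Rightarrow> int" where
  "cc m n k i j =
     (if i + j < int k then 0
      else (\<Sum>l = 0..k. (-1) ^ l * ibinom (i + j - int k) (i - int l)
                         * ibinom (int m - int l) (int k - int l)
                         * ibinom (int n - int k + int l) (int l)))"

end

theory Submission
  imports Defs
begin

definition sg :: "int \<Rightarrow> int" where "sg l = (if even l then 1 else -1)"

lemma sg_m1: "sg (l - 1) = - sg l"
  unfolding sg_def by auto

lemma ib_neg: "b < 0 \<or> b > a \<Longrightarrow> ibinom a b = 0"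
  unfolding ibinom_def by auto

lemma ib_pascal:
  assumes "\<not> (a = 0 \<and> b = 0)"
  shows "ibinom a b = ibinom (a - 1) b + ibinom (a - 1) (b - 1)"
proof -
  consider "b < 0" | "b = 0" | "b > 0 \<and> b > a" | "b > 0 \<and> b \<le> a" by linarith
  then show ?thesis
  proof cases
    case 1 then show ?thesis unfolding ibinom_def by auto
  next
    case 2 then show ?thesis using assms unfolding ibinom_def by auto
  next
    case 3 then show ?thesis unfolding ibinom_def by auto
  next
    case 4
    then have "nat a choose nat b = (nat a - 1 choose (nat b - 1)) + (nat a - 1 choose nat b)"
      by (intro choose_reduce_nat) auto
    moreover have "nat (a - 1) = nat a - 1" "nat (b - 1) = nat b - 1" using 4 by auto
    moreover have "b = a \<Longrightarrow> nat a - 1 choose nat b = 0" using 4 by simp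
    ultimately show ?thesis using 4 unfolding ibinom_def by auto
  qed
qed

definition F :: "int \<Rightarrow> int \<Rightarrow> int \<Rightarrow> int \<Rightarrow> int \<Rightarrow> int \<Rightarrow> int" where
  "F M N K i j l = sg l * ibinom (i + j - K) (i - l) * ibinom (M - l) (K - l) * ibinom (N - K + l) l"

lemma F_zero: "l < 0 \<or> l > K \<Longrightarrow> F M N K i j l = 0"
  unfolding F_def using ib_neg by auto

lemma sum_F_range:
  assumes "a \<le> 0" "K \<le> b"
  shows "sum (F M N K i j) {a..b} = sum (F M N K i j) {0..K}"
  by (rule sum.mono_neutral_right) (use assms F_zero in auto)

lemma sum_shift: "sum (\<lambda>l. f (l - 1)) {a..b} = sum f {a - 1..b - (1::int)}"
proof -
  have "sum f {a - 1..b - 1} = sum (f \<circ> (\<lambda>l. l - 1)) {a..b}"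
  proof (rule sum.reindex_cong[where l="\<lambda>l. l - 1"])
    show "{a - 1..b - 1} = (\<lambda>l. l - 1) ` {a..b}"
      by (auto simp: image_iff intro!: bexI[where x="_ + 1"])
  qed (auto simp: inj_on_def)
  then show ?thesis by simp
qed

lemma cc_F: "cc m n k i j = sum (F (int m) (int n) (int k) i j) {0..int k}"
proof -
  have "(\<Sum>l = 0..k. (-1) ^ l * ibinom (i + j - int k) (i - int l)
                         * ibinom (int m - int l) (int k - int l)
                         * ibinom (int n - int k + int l) (int l))
        = sum (F (int m) (int n) (int k) i j \<circ> int) {0..k}"
    by (rule sum.cong) (auto simp: F_def sg_def)
  also have "\<dots> = sum (F (int m) (int n) (int k) i j) {0..int k}"
    by (subst sum.reindex[symmetric]) (auto simp: image_int_atLeastAtMost)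
  finally have 1: "(\<Sum>l = 0..k. (-1) ^ l * ibinom (i + j - int k) (i - int l)
                         * ibinom (int m - int l) (int k - int l)
                         * ibinom (int n - int k + int l) (int l))
        = sum (F (int m) (int n) (int k) i j) {0..int k}" .
  show ?thesis
  proof (cases "i + j < int k")
    case True
    then have "sum (F (int m) (int n) (int k) i j) {0..int k} = 0"
      by (intro sum.neutral) (auto simp: F_def ibinom_def)
    then show ?thesis using True by (simp add: cc_def)
  next
    case False then show ?thesis using 1 by (simp add: cc_def)
  qed
qed

lemma P1:
  assumes "M \<noteq> K"
  shows "F M N K i j l = F (M-1) N K i j l + F (M-1) (N-1) (K-1) i (j-1) l"
proof -
  have p: "ibinom (M-l) (K-l) = ibinom (M-1-l) (K-l) + ibinom (M-1-l) (K-1-l)"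
    using ib_pascal[of "M-l" "K-l"] assms by (simp add: algebra_simps)
  have e: "i + (j - 1) - (K - 1) = i + j - K" "N - 1 - (K - 1) + l = N - K + l" by simp_all
  show ?thesis unfolding F_def e p by (simp add: algebra_simps)
qed

lemma P2:
  assumes "N \<noteq> K"
  shows "F M N K i j l = F M (N-1) K i j l - F (M-1) (N-1) (K-1) (i-1) j (l-1)"
proof -
  have p: "ibinom (N-K+l) l = ibinom (N-1-K+l) l + ibinom (N-1-K+l) (l-1)"
    using ib_pascal[of "N-K+l" l] assms by (simp add: algebra_simps)
  have e: "i - 1 + j - (K - 1) = i + j - K" "i - 1 - (l - 1) = i - l"
    "M - 1 - (l - 1) = M - l" "K - 1 - (l - 1) = K - l" "N - 1 - (K - 1) + (l - 1) = N - 1 - K + l" by simp_all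
  show ?thesis unfolding F_def e p sg_m1 by (simp add: algebra_simps)
qed

lemma P3:
  assumes "M \<noteq> K" "N \<noteq> K" "i + j > K"
  shows "F M N K i j l = F (M-1) N K (i-1) j l + F M (N-1) K i (j-1) l
     + F (M-1) (N-1) (K-1) (i-1) (j-1) l - F (M-1) (N-1) (K-1) (i-1) (j-1) (l-1)"
proof -
  have p1: "ibinom (i+j-K) (i-l) = ibinom (i+j-K-1) (i-l) + ibinom (i+j-K-1) (i-l-1)"
    using ib_pascal[of "i+j-K" "i-l"] assms by (simp add: algebra_simps)
  have p2: "ibinom (M-l) (K-l) = ibinom (M-1-l) (K-l) + ibinom (M-1-l) (K-1-l)"
    using ib_pascal[of "M-l" "K-l"] assms by (simp add: algebra_simps)
  have p3: "ibinom (N-K+l) l = ibinom (N-1-K+l) l + ibinom (N-1-K+l) (l-1)"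
    using ib_pascal[of "N-K+l" l] assms by (simp add: algebra_simps)
  have e: "i - 1 + j - K = i+j-K-1" "i + (j - 1) - K = i+j-K-1" "i - 1 - l = i-l-1"
    "i - 1 + (j - 1) - (K - 1) = i+j-K-1" 
    "N - 1 - (K - 1) + l = N-K+l" "i - 1 - (l - 1) = i - l"
    "M - 1 - (l - 1) = M - l" "K - 1 - (l - 1) = K - l" "N - 1 - (K - 1) + (l - 1) = N - 1 - K + l"
    by simp_all
  show ?thesis unfolding F_def e p1 p2 p3 sg_m1 by (simp add: algebra_simps)
qed

lemma P4:
  assumes "M \<noteq> K" "N \<noteq> K" "i + j > K"
  shows "F M N K i j l = F (M+1) N (K+1) i j l - F M (N+1) (K+1) i j l
     + F M N K (i-1) j l - F M N K (i-1) j (l-1)"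
proof -
  have p1: "ibinom (i+j-K) (i-l) = ibinom (i+j-K-1) (i-l) + ibinom (i+j-K-1) (i-l-1)"
    using ib_pascal[of "i+j-K" "i-l"] assms by (simp add: algebra_simps)
  have p2: "ibinom (M+1-l) (K+1-l) = ibinom (M-l) (K+1-l) + ibinom (M-l) (K-l)"
    using ib_pascal[of "M+1-l" "K+1-l"] assms by (simp add: algebra_simps)
  have p3: "ibinom (N-K+l) l = ibinom (N-1-K+l) l + ibinom (N-1-K+l) (l-1)"
    using ib_pascal[of "N-K+l" l] assms by (simp add: algebra_simps)
  have e: "i + j - (K + 1) = i+j-K-1" "N - (K + 1) + l = N-1-K+l" "N + 1 - (K + 1) + l = N-K+l"
    "i - 1 + j - K = i+j-K-1" "i - 1 - l = i-l-1"
    "i - 1 - (l - 1) = i - l" "M - (l - 1) = M+1-l" "K - (l - 1) = K+1-l" "N - K + (l - 1) = N-1-K+l"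
    by simp_all
  show ?thesis unfolding F_def e p1 p2 p3 sg_m1 by (simp add: algebra_simps)
qed

lemma cc_F_gen: "a \<le> 0 \<Longrightarrow> int k \<le> b \<Longrightarrow> cc m n k i j = sum (F (int m) (int n) (int k) i j) {a..b}"
  using cc_F sum_F_range by metis


lemma part1:
  assumes "1 \<le> k" "k + 1 \<le> m" "k \<le> n"
  shows "cc m n k i j = cc (m - 1) n k i j + cc (m - 1) (n - 1) (k - 1) i (j - 1)"
proof -
  have c: "int (m-1) = int m - 1" "int (n-1) = int n - 1" "int (k-1) = int k - 1" using assms by auto
  have e1: "cc (m - 1) n k i j = sum (F (int m - 1) (int n) (int k) i j) {0..int k}"
    using cc_F_gen[of 0 k "int k" "m-1" n i j] unfolding c by simp
  have e2: "cc (m - 1) (n - 1) (k - 1) i (j - 1) = sum (F (int m-1) (int n-1) (int k-1) i (j-1)) {0..int k}"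
    using cc_F_gen[of 0 "k-1" "int k" "m-1" "n-1" i "j-1"] unfolding c by simp
  have "cc m n k i j = sum (F (int m) (int n) (int k) i j) {0..int k}" by (rule cc_F_gen) auto
  also have "\<dots> = sum (\<lambda>l. F (int m-1) (int n) (int k) i j l + F (int m-1) (int n-1) (int k-1) i (j-1) l) {0..int k}"
    by (rule sum.cong[OF refl], rule P1) (use assms in auto)
  also have "\<dots> = cc (m - 1) n k i j + cc (m - 1) (n - 1) (k - 1) i (j - 1)"
    unfolding sum.distrib e1 e2 ..
  finally show ?thesis .
qed

lemma part2:
  assumes "1 \<le> k" "k \<le> m" "k + 1 \<le> n"
  shows "cc m n k i j = cc m (n - 1) k i j - cc (m - 1) (n - 1) (k - 1) (i - 1) j"
proof -
  have c: "int (m-1) = int m - 1" "int (n-1) = int n - 1" "int (k-1) = int k - 1" using assms by auto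
  have e1: "cc m (n - 1) k i j = sum (F (int m) (int n - 1) (int k) i j) {0..int k}"
    using cc_F_gen[of 0 k "int k" m "n-1" i j] unfolding c by simp
  have e2: "cc (m - 1) (n - 1) (k - 1) (i - 1) j = sum (F (int m-1) (int n-1) (int k-1) (i-1) j) {0-1..int k-1}"
    using cc_F_gen[of "0-1" "k-1" "int k - 1" "m-1" "n-1" "i-1" j] unfolding c by simp
  have "cc m n k i j = sum (F (int m) (int n) (int k) i j) {0..int k}" by (rule cc_F_gen) auto
  also have "\<dots> = sum (\<lambda>l. F (int m) (int n-1) (int k) i j l - F (int m-1) (int n-1) (int k-1) (i-1) j (l-1)) {0..int k}"
    by (rule sum.cong[OF refl], rule P2) (use assms in auto)
  also have "\<dots> = sum (F (int m) (int n-1) (int k) i j) {0..int k} - sum (F (int m-1) (int n-1) (int k-1) (i-1) j) {0-1..int k-1}"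
    unfolding sum_subtractf sum_shift ..
  also have "\<dots> = cc m (n - 1) k i j - cc (m - 1) (n - 1) (k - 1) (i - 1) j"
    unfolding e1 e2 ..
  finally show ?thesis .
qed

lemma part3:
  assumes "k + 1 \<le> m" "k + 1 \<le> n" "i + j > int k"
  shows "cc m n k i j = cc (m - 1) n k (i - 1) j + cc m (n - 1) k i (j - 1)"
proof -
  have c: "int (m-1) = int m - 1" "int (n-1) = int n - 1" using assms by auto
  have e1: "cc (m - 1) n k (i-1) j = sum (F (int m - 1) (int n) (int k) (i-1) j) {0..int k}"
    using cc_F_gen[of 0 k "int k" "m-1" n "i-1" j] unfolding c by simp
  have e2: "cc m (n - 1) k i (j-1) = sum (F (int m) (int n - 1) (int k) i (j-1)) {0..int k}"
    using cc_F_gen[of 0 k "int k" m "n-1" i "j-1"] unfolding c by simp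
  define H where "H = F (int m-1) (int n-1) (int k-1) (i-1) (j-1)"
  have eq: "F (int m) (int n) (int k) i j l = F (int m-1) (int n) (int k) (i-1) j l + F (int m) (int n-1) (int k) i (j-1) l
       + H l - H (l-1)" for l
    unfolding H_def by (rule P3) (use assms in auto)
  have "cc m n k i j = sum (F (int m) (int n) (int k) i j) {0..int k}" by (rule cc_F_gen) auto
  also have "\<dots> = sum (\<lambda>l. F (int m-1) (int n) (int k) (i-1) j l + F (int m) (int n-1) (int k) i (j-1) l
       + H l - H (l-1)) {0..int k}"
    unfolding eq ..
  also have "\<dots> = sum (F (int m-1) (int n) (int k) (i-1) j) {0..int k} + sum (F (int m) (int n-1) (int k) i (j-1)) {0..int k}
       + sum H {0..int k} - sum H {0-1..int k - 1}"
    unfolding sum.distrib sum_subtractf sum_shift ..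
  also have "sum H {0..int k} = sum H {0-1..int k - 1}"
    unfolding H_def by (subst (1 2) sum_F_range) auto
  finally show ?thesis unfolding e1 e2 by simp
qed

lemma part4:
  assumes "k + 1 \<le> min m n" "i + j > int k"
  shows "cc m n k i j = cc (m + 1) n (k + 1) i j - cc m (n + 1) (k + 1) i j"
proof -
  have e1: "cc (m+1) n (k+1) i j = sum (F (int m + 1) (int n) (int k + 1) i j) {0..int k + 1}"
    using cc_F_gen[of 0 "k+1" "int k + 1" "m+1" n i j] by (simp add: ac_simps)
  have e2: "cc m (n+1) (k+1) i j = sum (F (int m) (int n + 1) (int k + 1) i j) {0..int k + 1}"
    using cc_F_gen[of 0 "k+1" "int k + 1" m "n+1" i j] by (simp add: ac_simps)
  define P where "P = F (int m) (int n) (int k) (i-1) j"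
  have eq: "F (int m) (int n) (int k) i j l = F (int m+1) (int n) (int k+1) i j l - F (int m) (int n+1) (int k+1) i j l
       + P l - P (l-1)" for l
    unfolding P_def by (rule P4) (use assms in auto)
  have "cc m n k i j = sum (F (int m) (int n) (int k) i j) {0..int k + 1}" by (rule cc_F_gen) auto
  also have "\<dots> = sum (\<lambda>l. F (int m+1) (int n) (int k+1) i j l - F (int m) (int n+1) (int k+1) i j l
       + P l - P (l-1)) {0..int k + 1}"
    unfolding eq ..
  also have "\<dots> = sum (F (int m+1) (int n) (int k+1) i j) {0..int k + 1} - sum (F (int m) (int n+1) (int k+1) i j) {0..int k + 1}
       + sum P {0..int k + 1} - sum P {0-1..int k + 1 - 1}"
    unfolding sum.distrib sum_subtractf sum_shift ..
  also have "sum P {0..int k + 1} = sum P {0-1..int k + 1 - 1}"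
    unfolding P_def by (subst (1 2) sum_F_range) auto
  finally show ?thesis unfolding e1 e2 by simp
qed

theorem proposition7p3:
  fixes m n k :: nat and i j :: int
  shows "(1 \<le> k \<and> k + 1 \<le> m \<and> k \<le> n \<longrightarrow>
            cc m n k i j = cc (m - 1) n k i j + cc (m - 1) (n - 1) (k - 1) i (j - 1))
       \<and> (1 \<le> k \<and> k \<le> m \<and> k + 1 \<le> n \<longrightarrow>
            cc m n k i j = cc m (n - 1) k i j - cc (m - 1) (n - 1) (k - 1) (i - 1) j)
       \<and> (k + 1 \<le> m \<and> k + 1 \<le> n \<and> i + j > int k \<longrightarrow>
            cc m n k i j = cc (m - 1) n k (i - 1) j + cc m (n - 1) k i (j - 1))
       \<and> (k + 1 \<le> min m n \<and> i + j > int k \<longrightarrow>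
            cc m n k i j = cc (m + 1) n (k + 1) i j - cc m (n + 1) (k + 1) i j)"
  using part1 part2 part3 part4 by blast

end
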